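(* Let $K,M\in\mathbb{N}$, $L>0$, and let $\mathbf{x}$ be a random vector with probability density $p\colon\mathbb{R}^K\to\mathbb{R}_+$ supported on $\mathcal{X}=[0,1]^K$ (i.e. $\Pr(\mathbf{x}\in\mathcal{X})=1$) which is $L$-Lipschitz on $\mathbb{R}^K$ with respect to the $\ell_1$-norm. Let $\tilde{\mathbf{x}}=\Delta_M(\mathbf{x})$ be the element-wise quantization with $\Delta_M(x)=\lfloor Mx\rfloor/M$, and let $\bar{\mathbf{x}}=\tilde{\mathbf{x}}+\mathbf{u}$ with $\mathbf{u}$ uniform on $[0,\frac1M]^K$ independent of $\mathbf{x}$; let $q$ be the density of $\bar{\mathbf{x}}$. Then $|p(\mathbf{x})-q(\mathbf{x})|\le\frac{LK}{2M}$ for every $\mathbf{x}\in\mathcal{X}$.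
   Context: Equivalently, $q$ is constant on each cell $\Delta_M^{-1}(\tilde{\mathbf{x}})$ and equals $M^K\int_{\Delta_M^{-1}(\tilde{\mathbf{x}})}p\,\mathrm{d}\lambda^K$ there. *)

theory Defs
  imports "HOL-Analysis.Analysis"
begin

definition quant :: "nat \<Rightarrow> real ^ 'n \<Rightarrow> real ^ 'n" where
  "quant M x = (\<chi> i. real_of_int \<lfloor>real M * x $ i\<rfloor> / real M)"

text \<open>Density of the dithered quantized vector: on each cell Delta_M^{-1}(x~) it equals
  M^K times the integral of p over that cell.\<close>
definition dither_density :: "nat \<Rightarrow> (real ^ 'n \<Rightarrow> real) \<Rightarrow> real ^ 'n \<Rightarrow> real" where
  "dither_density M p x = real M ^ CARD('n) * integral (quant M -` {quant M x}) p"

definition l1_dist :: "real ^ 'n \<Rightarrow> real ^ 'n \<Rightarrow> real" where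
  "l1_dist x y = (\<Sum>i\<in>UNIV. \<bar>x $ i - y $ i\<bar>)"

end

theory Submission
  imports Defs
begin

lemma refl_ineq:
  fixes a h xi yi :: real
  assumes "a \<le> xi" "xi \<le> a + h" "a \<le> yi" "yi \<le> a + h"
  shows "\<bar>xi - yi\<bar> + \<bar>xi - (a + (a + h) - yi)\<bar> \<le> h"
  using assms by (auto simp: abs_if split: if_splits)

lemma half_ineq: "\<bar>(u::real) - (v + w) / 2\<bar> * 2 \<le> \<bar>u - v\<bar> + \<bar>u - w\<bar>"
  by (simp add: abs_if field_simps)

theorem lemma3:
  fixes p :: "real ^ 'n \<Rightarrow> real" and M :: nat and L :: real
  assumes "M > 0" and "L > 0"
    and "\<And>x. p x \<ge> 0"
    and "(p has_integral 1) UNIV"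
    and "(p has_integral 1) (cbox 0 1)"
    and "\<And>x y. \<bar>p x - p y\<bar> \<le> L * l1_dist x y"
    and "x \<in> cbox 0 1"
  shows "\<bar>p x - dither_density M p x\<bar> \<le> L * real CARD('n) / (2 * real M)"
proof -
  have M0: "real M > 0" using assms(1) by simp
  define h :: real where "h = 1 / real M"
  have h0: "h > 0" using M0 by (simp add: h_def)
  define a where "a = quant M x"
  define b :: "real ^ 'n" where "b = (\<chi> i. a $ i + h)"
  have fl: "\<And>y i. (quant M y = a) \<longleftrightarrow> (\<forall>i. a $ i \<le> y $ i \<and> y $ i < a $ i + h)"
  proof -
    fix y :: "real ^ 'n"
    have "(quant M y = a) \<longleftrightarrow> (\<forall>i. \<lfloor>real M * y $ i\<rfloor> = \<lfloor>real M * x $ i\<rfloor>)"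
      using M0 by (auto simp: a_def quant_def vec_eq_iff)
    also have "\<dots> \<longleftrightarrow> (\<forall>i. a $ i \<le> y $ i \<and> y $ i < a $ i + h)"
    proof (intro all_cong1)
      fix i
      let ?k = "\<lfloor>real M * x $ i\<rfloor>"
      have ai: "a $ i = of_int ?k / real M" by (simp add: a_def quant_def)
      have "(\<lfloor>real M * y $ i\<rfloor> = ?k) \<longleftrightarrow> (of_int ?k \<le> real M * y $ i \<and> real M * y $ i < of_int ?k + 1)"
        by (simp add: floor_eq_iff)
      also have "\<dots> \<longleftrightarrow> (a $ i \<le> y $ i \<and> y $ i < a $ i + h)"
        using M0 unfolding ai h_def by (simp add: field_simps)
      finally show "(\<lfloor>real M * y $ i\<rfloor> = ?k) \<longleftrightarrow> (a $ i \<le> y $ i \<and> y $ i < a $ i + h)" .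
    qed
    finally show "(quant M y = a) \<longleftrightarrow> (\<forall>i. a $ i \<le> y $ i \<and> y $ i < a $ i + h)" .
  qed
  have xcell: "\<forall>i. a $ i \<le> x $ i \<and> x $ i < a $ i + h" using fl[of x] by (simp add: a_def)
  have sub1: "box a b \<subseteq> quant M -` {a}"
  proof
    fix y assume "y \<in> box a b"
    then have "\<forall>i. a $ i \<le> y $ i \<and> y $ i < a $ i + h" by (auto simp: mem_box_cart b_def less_imp_le)
    then show "y \<in> quant M -` {a}" using fl[of y] by simp
  qed
  have sub2: "quant M -` {a} \<subseteq> cbox a b"
  proof
    fix y assume "y \<in> quant M -` {a}"
    then have "\<forall>i. a $ i \<le> y $ i \<and> y $ i < a $ i + h" using fl[of y] by simp
    then show "y \<in> cbox a b" by (auto simp: mem_box_cart b_def less_imp_le)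
  qed
  have lip: "\<And>y z. \<bar>p y - p z\<bar> \<le> L * real CARD('n) * dist y z"
  proof -
    fix y z :: "real ^ 'n"
    have "l1_dist y z \<le> (\<Sum>i\<in>(UNIV::'n set). dist y z)"
      unfolding l1_dist_def dist_norm
      by (rule sum_mono) (metis component_le_norm_cart vector_minus_component)
    then have "l1_dist y z \<le> real CARD('n) * dist y z" by simp
    then show "\<bar>p y - p z\<bar> \<le> L * real CARD('n) * dist y z"
      using assms(6)[of y z] assms(2)
      by (smt (verit, ccfv_SIG) mult_left_mono mult.assoc)
  qed
  have cont: "continuous_on UNIV p"
  proof (rule continuous_on_iff[THEN iffD2], intro ballI allI impI)
    fix y :: "real ^ 'n" and e :: real assume e: "e > 0"
    define C where "C = L * real CARD('n) + 1"
    have C: "C > 0" using assms(2) by (simp add: C_def add_pos_nonneg)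
    show "\<exists>d>0. \<forall>z\<in>UNIV. dist z y < d \<longrightarrow> dist (p z) (p y) < e"
    proof (intro exI[of _ "e / C"] conjI ballI impI)
      show "e / C > 0" using e C by simp
      fix z assume "dist z y < e / C"
      then have "C * dist z y < e" using C by (simp add: field_simps)
      moreover have "dist (p z) (p y) \<le> C * dist z y"
        using lip[of z y] zero_le_dist[of z y] unfolding C_def dist_real_def
        by (smt (verit) mult_right_mono)
      ultimately show "dist (p z) (p y) < e" by simp
    qed
  qed
  have intp: "(p has_integral integral (cbox a b) p) (cbox a b)"
    using cont by (intro integrable_integral integrable_continuous) (auto intro: continuous_on_subset)
  have negl: "negligible (cbox a b - box a b)" by (rule negligible_frontier_interval)
  have cellint: "integral (quant M -` {a}) p = integral (cbox a b) p"
  proof -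
    have "(p has_integral integral (cbox a b) p) (quant M -` {a})"
    proof (rule has_integral_spike_set_eq[THEN iffD1, OF _ _ intp])
      show "negligible {y \<in> cbox a b - quant M -` {a}. p y \<noteq> 0}"
        by (rule negligible_subset[OF negl]) (use sub1 in auto)
      show "negligible {y \<in> quant M -` {a} - cbox a b. p y \<noteq> 0}"
      proof -
        have "{y \<in> quant M -` {a} - cbox a b. p y \<noteq> 0} = {}" using sub2 by blast
        then show ?thesis by (metis negligible_empty)
      qed
    qed
    then show ?thesis by (rule integral_unique)
  qed
  define I where "I = integral (cbox a b) p"
  have dd: "dither_density M p x = real M ^ CARD('n) * I"
    unfolding dither_density_def I_def using cellint by (simp add: a_def)
  have img: "(\<lambda>y. (1 / (-1::real)) *\<^sub>R y + -((1 / (-1::real)) *\<^sub>R (a + b))) ` cbox a b = cbox a b"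
  proof -
    have "(\<lambda>y. (1 / (-1::real)) *\<^sub>R y + -((1 / (-1::real)) *\<^sub>R (a + b))) = (\<lambda>y. a + b - y)"
      by (rule ext) simp
    moreover have "(\<lambda>y. a + b - y) ` cbox a b = cbox a b"
    proof
      show "(\<lambda>y. a + b - y) ` cbox a b \<subseteq> cbox a b"
        by (auto simp: mem_box_cart)
      show "cbox a b \<subseteq> (\<lambda>y. a + b - y) ` cbox a b"
      proof
        fix y assume "y \<in> cbox a b"
        then have "a + b - y \<in> cbox a b" by (auto simp: mem_box_cart)
        then show "y \<in> (\<lambda>y. a + b - y) ` cbox a b" by (rule rev_image_eqI) simp
      qed
    qed
    ultimately show ?thesis by simp
  qed
  have intr: "((\<lambda>y. p (a + b - y)) has_integral I) (cbox a b)"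
    using has_integral_affinity[OF intp, of "-1" "a + b"] unfolding img I_def
    by (simp add: algebra_simps)
  have hint: "((\<lambda>y. p x - (p y + p (a + b - y)) / 2) has_integral (p x * Henstock_Kurzweil_Integration.content (cbox a b) - I)) (cbox a b)"
  proof -
    have "((\<lambda>y. (p y + p (a + b - y)) / 2) has_integral (I + I) / 2) (cbox a b)"
      using has_integral_add[OF intp[folded I_def] intr] by (rule has_integral_divide)
    then have "((\<lambda>y. (p y + p (a + b - y)) / 2) has_integral I) (cbox a b)" by simp
    from has_integral_diff[OF has_integral_const[of "p x" a b] this]
    show ?thesis by (simp add: mult.commute)
  qed
  have bound: "norm (p x - (p y + p (a + b - y)) / 2) \<le> L * real CARD('n) * h / 2"
    if y: "y \<in> cbox a b" for y
  proof -
    have "\<bar>p x - p y\<bar> + \<bar>p x - p (a + b - y)\<bar> \<le> L * (l1_dist x y + l1_dist x (a + b - y))"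
      using assms(6)[of x y] assms(6)[of x "a + b - y"] by (simp add: algebra_simps)
    also have "l1_dist x y + l1_dist x (a + b - y) \<le> (\<Sum>i\<in>(UNIV::'n set). h)"
      unfolding l1_dist_def sum.distrib[symmetric]
    proof (rule sum_mono)
      fix i
      have "a $ i \<le> y $ i" "y $ i \<le> a $ i + h" using y by (auto simp: mem_box_cart b_def)
      then show "\<bar>x $ i - y $ i\<bar> + \<bar>x $ i - (a + b - y) $ i\<bar> \<le> h"
        using refl_ineq[of "a $ i" "x $ i" h "y $ i"] xcell[rule_format, of i] by (simp add: b_def)
    qed
    also have "(\<Sum>i\<in>(UNIV::'n set). h) = real CARD('n) * h" by simp
    finally have "\<bar>p x - p y\<bar> + \<bar>p x - p (a + b - y)\<bar> \<le> L * (real CARD('n) * h)"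
      using assms(2) by (simp add: mult_left_mono)
    moreover have "\<bar>p x - (p y + p (a + b - y)) / 2\<bar> * 2 \<le> \<bar>p x - p y\<bar> + \<bar>p x - p (a + b - y)\<bar>"
      by (rule half_ineq)
    ultimately show ?thesis by simp
  qed
  have cont_ab: "Henstock_Kurzweil_Integration.content (cbox a b) = h ^ CARD('n)"
  proof -
    have "cbox a b \<noteq> {}" proof -
      have "a \<in> cbox a b" using h0 by (auto simp: mem_box_cart b_def)
      then show ?thesis by blast
    qed
    then show ?thesis by (simp add: content_cbox_cart b_def)
  qed
  have "norm (p x * Henstock_Kurzweil_Integration.content (cbox a b) - I) \<le> L * real CARD('n) * h / 2 * Henstock_Kurzweil_Integration.content (cbox a b)"
    by (rule has_integral_bound[OF _ hint bound]) (use assms(2) h0 in auto)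
  then have "\<bar>p x * h ^ CARD('n) - I\<bar> \<le> L * real CARD('n) * h / 2 * h ^ CARD('n)"
    by (simp add: cont_ab)
  then have "\<bar>p x * h ^ CARD('n) - I\<bar> * real M ^ CARD('n) \<le> L * real CARD('n) * h / 2 * h ^ CARD('n) * real M ^ CARD('n)"
    by (rule mult_right_mono) simp
  moreover have "h ^ CARD('n) * real M ^ CARD('n) = 1"
    using M0 by (simp add: h_def power_mult_distrib[symmetric])
  moreover have "\<bar>p x * h ^ CARD('n) - I\<bar> * real M ^ CARD('n) = \<bar>p x - real M ^ CARD('n) * I\<bar>"
  proof -
    have "\<bar>p x * h ^ CARD('n) - I\<bar> * real M ^ CARD('n) = \<bar>(p x * h ^ CARD('n) - I) * real M ^ CARD('n)\<bar>"
      by (simp add: abs_mult)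
    also have "(p x * h ^ CARD('n) - I) * real M ^ CARD('n) = p x * (h ^ CARD('n) * real M ^ CARD('n)) - real M ^ CARD('n) * I"
      by (simp add: algebra_simps)
    finally show ?thesis using \<open>h ^ CARD('n) * real M ^ CARD('n) = 1\<close> by simp
  qed
  ultimately have "\<bar>p x - real M ^ CARD('n) * I\<bar> \<le> L * real CARD('n) * h / 2"
    by (metis mult.assoc mult_1_right)
  then show ?thesis by (simp add: dd h_def)
qed

end
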